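(* Let $n\ge2$ and $1\le\ell\le s$ be integers, and consider the saturation SQGT model with thresholds $(1,2,\dots,s)$, in which a test $\mathbf{x}\in\{0,1\}^n$ applied to $\mathbf{b}$ returns $\min(\mathbf{x}\cdot\mathbf{b},s)$. Let $m=\lceil\log_2 n\rceil$ and let $\mathbf{N}$ be the $(m+1)\times n$ binary matrix with $\mathbf{N}(r,j)$ equal to the $r$-th binary digit of $j$ (i.e. $\lfloor j/2^r\rfloor\bmod2$) for $0\le r<m$, $0\le j<n$, and whose last row is all ones. Then $\mathbf{N}$ solves $\mathrm{Burst}(n,\le\ell,\underline{\eta})$: any two distinct bursts in $\{0,1\}^n$ of lengths between $1$ and $\ell$ yield distinct outcome vectors. Thus $\lceil\log_2 n\rceil+1$ measurements suffice.
   Context: Items are indexed $0,\dots,n-1$. A burst with head $a$ and tail $t$ ($0\le a\le t\le n-1$) is the vector in $\{0,1\}^n$ whose $j$-th coordinate is $1$ iff $a\le j\le t$; its length is $t-a+1$. $\mathrm{Burst}(n,\le\ell,\underline{\eta})$ is the problem of identifying an unknown burst of length in $\{1,\dots,\ell\}$ from the outcome vector (entrywise outcomes of the rows of the test matrix). *)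

theory Defs
  imports Complex_Main
begin

text \<open>Burst with head a and tail t, as a 0/1 vector indexed by nat (relevant indices 0..n-1).\<close>
definition burst :: "nat \<Rightarrow> nat \<Rightarrow> nat \<Rightarrow> nat" where
  "burst a t j = (if a \<le> j \<and> j \<le> t then 1 else 0)"

definition mrows :: "nat \<Rightarrow> nat" where
  "mrows n = nat \<lceil>log 2 (real n)\<rceil>"

definition Nmat :: "nat \<Rightarrow> nat \<Rightarrow> nat \<Rightarrow> nat" where
  "Nmat n r j = (if r < mrows n then (j div 2 ^ r) mod 2 else 1)"

definition sat_outcome :: "nat \<Rightarrow> nat \<Rightarrow> (nat \<Rightarrow> nat) \<Rightarrow> (nat \<Rightarrow> nat) \<Rightarrow> nat" where
  "sat_outcome n s x b = min (\<Sum>j<n. x j * b j) s"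

definition outcome_vec :: "nat \<Rightarrow> nat \<Rightarrow> (nat \<Rightarrow> nat) \<Rightarrow> nat list" where
  "outcome_vec n s b = map (\<lambda>r. sat_outcome n s (Nmat n r) b) [0..<mrows n + 1]"

end

theory Submission
  imports Defs
begin

lemma bits_sum: "(\<Sum>r<m. 2^r * ((j::nat) div 2^r mod 2)) = j mod 2^m"
proof (induction m)
  case 0 then show ?case by simp
next
  case (Suc m)
  have "j mod 2^Suc m = j mod (2^m * 2)" by (simp add: mult.commute)
  also have "\<dots> = 2^m * (j div 2^m mod 2) + j mod 2^m" by (rule mod_mult2_eq)
  finally show ?case using Suc by simp
qed

lemma n_le: assumes "n \<ge> 2" shows "n \<le> 2 ^ mrows n"
proof -
  have l1: "log 2 (real n) \<ge> 1" using assms by simp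
  have "real n = 2 powr log 2 (real n)" using assms by simp
  also have "\<dots> \<le> 2 powr real_of_int \<lceil>log 2 (real n)\<rceil>"
    by (rule powr_mono) auto
  also have "real_of_int \<lceil>log 2 (real n)\<rceil> = real (mrows n)"
    unfolding mrows_def using l1 by simp
  also have "2 powr real (mrows n) = 2 ^ mrows n" by (simp add: powr_realpow)
  finally show ?thesis by (metis of_nat_le_iff of_nat_numeral of_nat_power)
qed

lemma burst_sum: assumes "t < n"
  shows "(\<Sum>j<n. f j * burst a t j) = sum f {a..t}"
proof -
  have "(\<Sum>j<n. f j * burst a t j) = (\<Sum>j<n. if j \<in> {a..t} then f j else 0)"
    by (rule sum.cong) (auto simp: burst_def)
  also have "\<dots> = sum f ({..<n} \<inter> {a..t})" by (simp add: sum.inter_restrict)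
  also have "{..<n} \<inter> {a..t} = {a..t}" using assms by auto
  finally show ?thesis .
qed

lemma gauss_shift: fixes a t :: nat assumes "a \<le> t"
  shows "sum (\<lambda>j. j) {a..t} = (t-a+1)*a + sum (\<lambda>i. i) {0..t-a}"
proof -
  have "t - a + a = t" using assms by simp
  then have "{a..t} = {0+a..(t-a)+a}" by simp
  then have "sum (\<lambda>j. j) {a..t} = sum (\<lambda>i. i + a) {0..t-a}"
    by (simp only: sum.shift_bounds_cl_nat_ivl)
  also have "\<dots> = sum (\<lambda>i. i) {0..t-a} + (t-a+1)*a" by (simp add: sum.distrib)
  finally show ?thesis by simp
qed

theorem mainTheorem9:
  fixes n l s a t a' t' :: nat
  assumes "n \<ge> 2" and "1 \<le> l" and "l \<le> s"
    and "a \<le> t" and "t \<le> n - 1" and "t - a + 1 \<le> l"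
    and "a' \<le> t'" and "t' \<le> n - 1" and "t' - a' + 1 \<le> l"
    and "map (burst a t) [0..<n] \<noteq> map (burst a' t') [0..<n]"
  shows "outcome_vec n s (burst a t) \<noteq> outcome_vec n s (burst a' t')"
proof
  assume eq: "outcome_vec n s (burst a t) = outcome_vec n s (burst a' t')"
  let ?m = "mrows n"
  have tn: "t < n" "t' < n" using assms by auto
  have row: "sat_outcome n s (Nmat n r) (burst a t) = sat_outcome n s (Nmat n r) (burst a' t')"
    if "r \<le> ?m" for r
  proof -
    have "r < length [0..<?m+1]" using that by simp
    then have "outcome_vec n s (burst a t) ! r = outcome_vec n s (burst a' t') ! r"
      using eq by simp
    then show ?thesis unfolding outcome_vec_def using that
      by (simp del: upt_Suc add: nth_map)
  qed
  have cnt: "(\<Sum>j<n. x j * burst a t j) \<le> t - a + 1" if "\<And>j. x j \<le> 1" for x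
  proof -
    have "(\<Sum>j<n. x j * burst a t j) = sum x {a..t}" using burst_sum[OF tn(1)] .
    also have "\<dots> \<le> sum (\<lambda>_. 1) {a..t}" by (rule sum_mono) (use that in auto)
    also have "\<dots> = t - a + 1" using assms(4) by simp
    finally show ?thesis .
  qed
  have cnt': "(\<Sum>j<n. x j * burst a' t' j) \<le> t' - a' + 1" if "\<And>j. x j \<le> 1" for x
  proof -
    have "(\<Sum>j<n. x j * burst a' t' j) = sum x {a'..t'}" using burst_sum[OF tn(2)] .
    also have "\<dots> \<le> sum (\<lambda>_. 1) {a'..t'}" by (rule sum_mono) (use that in auto)
    also have "\<dots> = t' - a' + 1" using assms(7) by simp
    finally show ?thesis .
  qed
  have N1: "Nmat n r j \<le> 1" for r j proof -
    have "(j div 2^r) mod 2 < (2::nat)" by (rule mod_less_divisor) simp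
    then have "(j div 2^r) mod 2 \<le> (1::nat)" by linarith
    then show ?thesis unfolding Nmat_def by (cases "r < mrows n") simp_all
  qed
  have exact: "(\<Sum>j<n. Nmat n r j * burst a t j) = (\<Sum>j<n. Nmat n r j * burst a' t' j)"
    if "r \<le> ?m" for r
  proof -
    have "min (\<Sum>j<n. Nmat n r j * burst a t j) s = min (\<Sum>j<n. Nmat n r j * burst a' t' j) s"
      using row[OF that] by (simp add: sat_outcome_def)
    moreover have "(\<Sum>j<n. Nmat n r j * burst a t j) \<le> s" using cnt[of "Nmat n r", OF N1] assms by linarith
    moreover have "(\<Sum>j<n. Nmat n r j * burst a' t' j) \<le> s" using cnt'[of "Nmat n r", OF N1] assms by linarith
    ultimately show ?thesis by simp
  qed
  have "(\<Sum>j<n. Nmat n ?m j * burst a t j) = sum (\<lambda>_. 1) {a..t}"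
    using burst_sum[OF tn(1), of "\<lambda>_. 1" a] by (simp add: Nmat_def)
  moreover have "(\<Sum>j<n. Nmat n ?m j * burst a' t' j) = sum (\<lambda>_. 1) {a'..t'}"
    using burst_sum[OF tn(2), of "\<lambda>_. 1" a'] by (simp add: Nmat_def)
  ultimately have L: "t - a = t' - a'" using exact[of ?m] assms(4,7) by simp
  have nm: "n \<le> 2 ^ ?m" using n_le assms(1) .
  have wsum: "(\<Sum>j<n. j * burst x y j) = (\<Sum>r<?m. 2^r * (\<Sum>j<n. Nmat n r j * burst x y j))" for x y
  proof -
    have "(\<Sum>j<n. j * burst x y j) = (\<Sum>j<n. (\<Sum>r<?m. 2^r * (j div 2^r mod 2)) * burst x y j)"
    proof (rule sum.cong)
      fix j assume "j \<in> {..<n}"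
      then have "j mod 2 ^ ?m = j" using nm by simp
      then show "j * burst x y j = (\<Sum>r<?m. 2^r * (j div 2^r mod 2)) * burst x y j"
        by (simp add: bits_sum)
    qed simp
    also have "\<dots> = (\<Sum>j<n. \<Sum>r<?m. 2^r * (Nmat n r j * burst x y j))"
      by (simp add: sum_distrib_right Nmat_def mult.assoc)
    also have "\<dots> = (\<Sum>r<?m. \<Sum>j<n. 2^r * (Nmat n r j * burst x y j))" by (rule sum.swap)
    also have "\<dots> = (\<Sum>r<?m. 2^r * (\<Sum>j<n. Nmat n r j * burst x y j))"
      by (simp add: sum_distrib_left)
    finally show ?thesis .
  qed
  have "(\<Sum>j<n. j * burst a t j) = (\<Sum>j<n. j * burst a' t' j)"
    unfolding wsum using exact by (intro sum.cong) auto
  then have "sum (\<lambda>j. j) {a..t} = sum (\<lambda>j. j) {a'..t'}"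
    using burst_sum[OF tn(1), of "\<lambda>j. j"] burst_sum[OF tn(2), of "\<lambda>j. j"] by simp
  then have "(t-a+1)*a = (t'-a'+1)*a'"
    using gauss_shift[OF assms(4)] gauss_shift[OF assms(7)] L by simp
  then have "(t'-a'+1)*a = (t'-a'+1)*a'" using L by simp
  then have "a = a'" by (rule mult_left_cancel[THEN iffD1, rotated]) simp
  then have "t = t'" using L assms(4,7) by simp
  then show False using assms(10) \<open>a = a'\<close> by simp
qed

end
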